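(* Let $\alpha>0$, $\gamma<0$, $\theta=(\alpha,-(\alpha+\gamma)/4,\gamma)$, and let $R$ be a representation of $\mathbf{Q}$ with dimension vector $(1,4,1)$ that is $\theta$-stable. If $R$ is not globally injective, then $\gamma<-\alpha$. If $R$ is not globally surjective, then $\gamma>-\alpha$.
   Context: The quiver $\mathbf{Q}$ has vertices $-1,0,1$, arrows $\eta_0,\dots,\eta_3:-1\to0$, $\phi_0,\dots,\phi_3:0\to1$ and relations $\phi_i\eta_j+\phi_j\eta_i=0$; a representation consists of vector spaces $V_{-1},V_0,V_1$ and linear maps $f_i:V_{-1}\to V_0$, $g_i:V_0\to V_1$ with $g_if_j+g_jf_i=0$. $R$ is globally injective (resp. surjective) if $\sum\lambda_if_i$ is injective (resp. $\sum\lambda_ig_i$ surjective) for all $\lambda\in\mathbb{C}^4\setminus\{0\}$. $R$ is $\theta$-stable if $\theta\cdot\dim R=0$ and $\theta\cdot\dim S<0$ for every nonzero proper subrepresentation $S$. *)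

theory Defs
  imports "HOL-Analysis.Analysis"
begin

text \<open>A representation of the quiver Q with dimension vector (1,4,1), after choosing bases:
  V_{-1} = complex^1, V_0 = complex^4, V_1 = complex^1.  The arrows eta_i, phi_i are indexed
  by the type 4; f i :: complex^1^4 is the matrix of f_i : V_{-1} -> V_0 and
  g i :: complex^4^1 is the matrix of g_i : V_0 -> V_1.\<close>

type_synonym repQ = "(4 \<Rightarrow> complex^1^4) \<times> (4 \<Rightarrow> complex^4^1)"

definition rep_f :: "repQ \<Rightarrow> 4 \<Rightarrow> complex^1^4" where "rep_f R = fst R"
definition rep_g :: "repQ \<Rightarrow> 4 \<Rightarrow> complex^4^1" where "rep_g R = snd R"

definition relations_hold :: "repQ \<Rightarrow> bool" where
  "relations_hold R \<longleftrightarrow> (\<forall>i j. rep_g R i ** rep_f R j + rep_g R j ** rep_f R i = 0)"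

definition is_subrep :: "repQ \<Rightarrow> (complex^1) set \<Rightarrow> (complex^4) set \<Rightarrow> (complex^1) set \<Rightarrow> bool" where
  "is_subrep R S0 S1 S2 \<longleftrightarrow> vec.subspace S0 \<and> vec.subspace S1 \<and> vec.subspace S2 \<and>
     (\<forall>i x. x \<in> S0 \<longrightarrow> rep_f R i *v x \<in> S1) \<and>
     (\<forall>i y. y \<in> S1 \<longrightarrow> rep_g R i *v y \<in> S2)"

definition theta_stable :: "real \<times> real \<times> real \<Rightarrow> repQ \<Rightarrow> bool" where
  "theta_stable \<theta> R \<longleftrightarrow>
     (case \<theta> of (t1, t2, t3) \<Rightarrow>
       t1 * 1 + t2 * 4 + t3 * 1 = 0 \<and>
       (\<forall>S0 S1 S2. is_subrep R S0 S1 S2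
          \<and> \<not> (S0 = {0} \<and> S1 = {0} \<and> S2 = {0})
          \<and> \<not> (S0 = UNIV \<and> S1 = UNIV \<and> S2 = UNIV)
          \<longrightarrow> t1 * real (vec.dim S0) + t2 * real (vec.dim S1) + t3 * real (vec.dim S2) < 0))"

definition globally_injective :: "repQ \<Rightarrow> bool" where
  "globally_injective R \<longleftrightarrow>
     (\<forall>c::complex^4. c \<noteq> 0 \<longrightarrow> inj (\<lambda>x. \<Sum>i\<in>UNIV. (c $ i) *s (rep_f R i *v x)))"

definition globally_surjective :: "repQ \<Rightarrow> bool" where
  "globally_surjective R \<longleftrightarrow>
     (\<forall>c::complex^4. c \<noteq> 0 \<longrightarrow> surj (\<lambda>y. \<Sum>i\<in>UNIV. (c $ i) *s (rep_g R i *v y)))"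

end

theory Submission
  imports Defs
begin

lemma mv_scale: "(A::complex^'m^'n) *v (a *s x) = a *s (A *v x)"
  by (simp add: vec_eq_iff matrix_vector_mult_def sum_distrib_left mult.left_commute)

lemma one_vec_scale:
  fixes z x :: "complex^1"
  assumes "z \<noteq> 0"
  shows "x = (x$1 / z$1) *s z"
proof -
  have "z$1 \<noteq> 0" using assms by (simp add: vec_eq_iff forall_1)
  then show ?thesis by (simp add: vec_eq_iff forall_1)
qed

lemma inj_part:
  fixes \<alpha> \<gamma> :: real and R :: repQ
  assumes "theta_stable (\<alpha>, - (\<alpha> + \<gamma>) / 4, \<gamma>) R"
    and "\<not> globally_injective R"
  shows "\<gamma> < - \<alpha>"
proof -
  define f where "f = rep_f R"
  have st: "\<And>S0 S1 S2. is_subrep R S0 S1 S2 \<Longrightarrow> \<not> (S0 = {0} \<and> S1 = {0} \<and> S2 = {0}) \<Longrightarrow> \<not> (S0 = UNIV \<and> S1 = UNIV \<and> S2 = UNIV) \<Longrightarrow>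
     \<alpha> * real (vec.dim S0) + (- (\<alpha> + \<gamma>) / 4) * real (vec.dim S1) + \<gamma> * real (vec.dim S2) < 0"
    using assms(1) unfolding theta_stable_def by simp
  obtain c :: "complex^4" where c0: "c \<noteq> 0"
    and ni: "\<not> inj (\<lambda>x. \<Sum>i\<in>UNIV. (c $ i) *s (f i *v x))"
    using assms(2) unfolding globally_injective_def f_def by blast
  then obtain x x' :: "complex^1" where xx: "x \<noteq> x'"
    and eq: "(\<Sum>i\<in>UNIV. (c $ i) *s (f i *v x)) = (\<Sum>i\<in>UNIV. (c $ i) *s (f i *v x'))"
    unfolding inj_def by blast
  define z where "z = x - x'"
  have z0: "z \<noteq> 0" using xx by (simp add: z_def)
  define v where "v i = f i *v z" for i
  have sumv: "(\<Sum>i\<in>UNIV. (c $ i) *s v i) = 0"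
  proof -
    have "(\<Sum>i\<in>UNIV. (c $ i) *s v i) = (\<Sum>i\<in>UNIV. (c $ i) *s (f i *v x) - (c $ i) *s (f i *v x'))"
      by (simp add: v_def z_def matrix_vector_mult_diff_distrib vector_ssub_ldistrib)
    also have "\<dots> = 0" using eq by (simp add: sum_subtractf)
    finally show ?thesis .
  qed
  obtain k where ck: "c $ k \<noteq> 0" using c0 by (metis vec_eq_iff zero_index)
  define S1 where "S1 = vec.span (v ` (UNIV - {k}))"
  have vk: "v k \<in> S1"
  proof -
    have "(\<Sum>i\<in>UNIV. (c $ i) *s v i) = (c $ k) *s v k + (\<Sum>i\<in>UNIV - {k}. (c $ i) *s v i)"
      by (simp add: sum.remove)
    then have vkeq: "v k = (- 1 / c $ k) *s (\<Sum>i\<in>UNIV - {k}. (c $ i) *s v i)"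
      using sumv ck by (simp add: vec_eq_iff field_simps eq_neg_iff_add_eq_0)
    have wS: "(\<Sum>i\<in>UNIV - {k}. (c $ i) *s v i) \<in> S1"
      unfolding S1_def
    proof (rule vec.span_sum)
      fix i assume "i \<in> UNIV - {k}"
      then have "v i \<in> vec.span (v ` (UNIV - {k}))" by (intro vec.span_base) blast
      then show "(c $ i) *s v i \<in> vec.span (v ` (UNIV - {k}))" by (rule vec.span_scale)
    qed
    show ?thesis unfolding vkeq using wS unfolding S1_def by (rule vec.span_scale)
  qed
  have vS: "v i \<in> S1" for i
    using vk by (cases "i = k") (auto simp: S1_def intro: vec.span_base)
  have fS: "f i *v y \<in> S1" for i y
  proof -
    have "f i *v y = (y$1 / z$1) *s v i"
      using one_vec_scale[OF z0, of y] by (metis mv_scale v_def)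
    then show ?thesis using vS[of i] unfolding S1_def by (simp add: vec.span_scale)
  qed
  have sub: "is_subrep R UNIV S1 UNIV"
    unfolding is_subrep_def using fS unfolding f_def S1_def by (simp add: vec.subspace_UNIV vec.subspace_span)
  have "card (v ` (UNIV - {k})) \<le> card (UNIV - {k} :: 4 set)" by (rule card_image_le) simp
  also have "\<dots> = 3" by simp
  finally have c3: "card (v ` (UNIV - {k})) \<le> 3" .
  have "vec.dim S1 = vec.dim (v ` (UNIV - {k}))" unfolding S1_def by (rule vec.dim_span)
  also have "\<dots> \<le> card (v ` (UNIV - {k}))" by (rule vec.dim_le_card') simp
  finally have d1: "vec.dim S1 \<le> 3" using c3 by linarith
  have dU: "vec.dim (UNIV :: (complex^4) set) = 4"
    by (simp only: vec_dim_card) simp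
  have dU1: "vec.dim (UNIV :: (complex^1) set) = 1"
    by (simp only: vec_dim_card) simp
  have "S1 \<noteq> UNIV" using d1 dU by auto
  moreover have "(UNIV :: (complex^1) set) \<noteq> {0}"
    by (metis UNIV_I one_index one_neq_zero singletonD zero_index)
  ultimately have "\<alpha> * real (vec.dim (UNIV :: (complex^1) set)) + (- (\<alpha> + \<gamma>) / 4) * real (vec.dim S1) + \<gamma> * real (vec.dim (UNIV :: (complex^1) set)) < 0"
    using st[OF sub] by blast
  then have "\<alpha> * 1 + (- (\<alpha> + \<gamma>) / 4) * real (vec.dim S1) + \<gamma> * 1 < 0" unfolding dU1 by simp
  moreover have "real (vec.dim S1) \<le> 3" using d1 by simp
  ultimately show ?thesis
  proof -
    assume a: "\<alpha> * 1 + (- (\<alpha> + \<gamma>) / 4) * real (vec.dim S1) + \<gamma> * 1 < 0" "real (vec.dim S1) \<le> 3"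
    show ?thesis
    proof (rule ccontr)
      assume "\<not> \<gamma> < - \<alpha>"
      then have "0 \<le> (\<alpha> + \<gamma>) * (4 - real (vec.dim S1))" using a(2) by simp
      then show False using a(1) by (simp add: algebra_simps divide_simps)
    qed
  qed
qed

lemma surj_part:
  fixes \<alpha> \<gamma> :: real and R :: repQ
  assumes "theta_stable (\<alpha>, - (\<alpha> + \<gamma>) / 4, \<gamma>) R"
    and "\<not> globally_surjective R"
  shows "\<gamma> > - \<alpha>"
proof -
  define g where "g = rep_g R"
  have st: "\<And>S0 S1 S2. is_subrep R S0 S1 S2 \<Longrightarrow> \<not> (S0 = {0} \<and> S1 = {0} \<and> S2 = {0}) \<Longrightarrow> \<not> (S0 = UNIV \<and> S1 = UNIV \<and> S2 = UNIV) \<Longrightarrow>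
     \<alpha> * real (vec.dim S0) + (- (\<alpha> + \<gamma>) / 4) * real (vec.dim S1) + \<gamma> * real (vec.dim S2) < 0"
    using assms(1) unfolding theta_stable_def by simp
  have "\<exists>c :: complex^4. c \<noteq> 0 \<and> \<not> surj (\<lambda>y. \<Sum>i\<in>UNIV. (c $ i) *s (g i *v y))"
    using assms(2) unfolding globally_surjective_def g_def by simp
  then obtain c :: "complex^4" where c0: "c \<noteq> 0"
    and ns: "\<not> surj (\<lambda>y. \<Sum>i\<in>UNIV. (c $ i) *s (g i *v y))"
    by (elim exE conjE)
  define w :: "complex^4" where "w = (\<chi> l. \<Sum>i\<in>UNIV. c $ i * g i $ 1 $ l)"
  have comp: "(\<Sum>i\<in>UNIV. (c $ i) *s (g i *v y)) $ 1 = (\<Sum>l\<in>UNIV. w $ l * y $ l)" for y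
  proof -
    have "(\<Sum>i\<in>UNIV. (c $ i) *s (g i *v y)) $ 1 = (\<Sum>i\<in>UNIV. c $ i * (\<Sum>l\<in>UNIV. g i $ 1 $ l * y $ l))"
      by (simp add: sum_component matrix_vector_mult_def)
    also have "\<dots> = (\<Sum>i\<in>UNIV. \<Sum>l\<in>UNIV. c $ i * g i $ 1 $ l * y $ l)"
      by (simp add: sum_distrib_left mult.assoc)
    also have "\<dots> = (\<Sum>l\<in>UNIV. \<Sum>i\<in>UNIV. c $ i * g i $ 1 $ l * y $ l)"
      by (rule sum.swap)
    also have "\<dots> = (\<Sum>l\<in>UNIV. w $ l * y $ l)"
      by (simp add: w_def sum_distrib_right)
    finally show ?thesis .
  qed
  have w0: "w = 0"
  proof (rule ccontr)
    assume "w \<noteq> 0"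
    then obtain j where wj: "w $ j \<noteq> 0" by (metis vec_eq_iff zero_index)
    have "surj (\<lambda>y. \<Sum>i\<in>UNIV. (c $ i) *s (g i *v y))"
    proof (rule surjI)
      fix t :: "complex^1"
      define y :: "complex^4" where "y = (\<chi> l. if l = j then t $ 1 / w $ j else 0)"
      have "(\<Sum>l\<in>UNIV. w $ l * y $ l) = t $ 1"
        using wj by (simp add: y_def if_distrib cong: if_cong)
      then show "(\<Sum>i\<in>UNIV. (c $ i) *s (g i *v y)) = t"
        using comp[of y] by (simp add: vec_eq_iff forall_1)
    qed
    then show False using ns by blast
  qed
  define M :: "complex^4^4" where "M = (\<chi> i l. g i $ 1 $ l)"
  have "transpose M *v c = w"
    unfolding w_def M_def by (simp add: vec_eq_iff matrix_vector_mult_def transpose_def mult.commute)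
  then have tc: "transpose M *v c = 0" using w0 by simp
  obtain y where y0: "y \<noteq> 0" and My: "M *v y = 0"
  proof -
    have "\<not> (\<forall>x. M *v x = 0 \<longrightarrow> x = 0)"
    proof
      assume "\<forall>x. M *v x = 0 \<longrightarrow> x = 0"
      then obtain B where "B ** M = mat 1" using matrix_left_invertible_ker by blast
      then have "M ** B = mat 1" using matrix_left_right_inverse by blast
      then have "transpose B ** transpose M = mat 1" by (metis matrix_transpose_mul transpose_mat)
      then have "\<forall>x. transpose M *v x = 0 \<longrightarrow> x = 0" using matrix_left_invertible_ker by blast
      then show False using tc c0 by blast
    qed
    then show ?thesis using that by blast
  qed
  define K where "K = {x :: complex^4. \<forall>i. g i *v x = 0}"
  have gy: "g i *v y = 0" for i
  proof -
    have "(M *v y) $ i = 0" using My by simp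
    then show ?thesis unfolding M_def
      by (simp add: vec_eq_iff forall_1 matrix_vector_mult_def)
  qed
  have yK: "y \<in> K" unfolding K_def using gy by blast
  have subK: "vec.subspace K"
    unfolding vec.subspace_def K_def
    by (simp add: matrix_vector_right_distrib mv_scale)
  have sub: "is_subrep R {0} K {0}"
    unfolding is_subrep_def using subK unfolding K_def g_def
    by (simp add: vec.subspace_0)
  have "K \<noteq> {0}" using yK y0 by blast
  moreover have "({0} :: (complex^1) set) \<noteq> UNIV"
    by (metis UNIV_I one_index one_neq_zero singletonD zero_index)
  ultimately have "\<alpha> * real (vec.dim ({0} :: (complex^1) set)) + (- (\<alpha> + \<gamma>) / 4) * real (vec.dim K) + \<gamma> * real (vec.dim ({0} :: (complex^1) set)) < 0"
    using st[OF sub] by blast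
  then have a: "(- (\<alpha> + \<gamma>) / 4) * real (vec.dim K) < 0" by simp
  have "vec.dim K \<noteq> 0" using yK y0 vec.dim_eq_0 by blast
  then have "real (vec.dim K) > 0" by (simp del: vec.dim_eq_0)
  then show ?thesis using a by (simp add: mult_less_0_iff)
qed

theorem mainTheorem12:
  fixes \<alpha> \<gamma> :: real and R :: repQ
  assumes "\<alpha> > 0" and "\<gamma> < 0"
    and "relations_hold R"
    and "theta_stable (\<alpha>, - (\<alpha> + \<gamma>) / 4, \<gamma>) R"
  shows "(\<not> globally_injective R \<longrightarrow> \<gamma> < - \<alpha>) \<and> (\<not> globally_surjective R \<longrightarrow> \<gamma> > - \<alpha>)"
  using inj_part[OF assms(4)] surj_part[OF assms(4)] by blast

end
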